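(* For $K\ge0$ define $g_0,g_1:[0,1]\to\mathbb{R}$ by $$g_0(u)=\begin{cases}0,&u\in[0,\frac12],\\ (u-\frac12)(1-u)(u-\frac23),&u\in(\frac12,1],\end{cases}\qquad g_1(u)=\begin{cases}0,&u\in[0,\frac1{11}]\cup[\frac12,\frac23],\\ K\operatorname{dist}(u,\{\frac1{11},\frac12\}),&u\in(\frac1{11},\frac12),\\ (u-\frac12)(1-u)(u-\frac23),&u\in(\frac23,1].\end{cases}$$ There are $M>0$ and $a\in(0,\frac1{16})$ (independent of $K$) such that the following hold for solutions $u$ with values in $[0,1]$: (i) If $u_t=u_{xx}+g_0(u)$ on $(0,1)\times\mathbb{R}$ and $u(0,\cdot)\le\chi_{(-\infty,0]}+\frac58\chi_{(0,\infty)}$, then $u(1,\cdot)\le\chi_{(-\infty,M]}+(\frac58-2a)\chi_{(M,\infty)}$. (ii) For all $K\ge0$: if $u_t=u_{xx}+g_1(u)$ on $(1,4)\times\mathbb{R}$ and $u(1,\cdot)\le\chi_{(-\infty,M]}+(\frac58-2a)\chi_{(M,\infty)}$, then $u(4,\cdot)\le\chi_{(-\infty,2M]}+(\frac58-a)\chi_{(2M,\infty)}$. (iii) If $u_t=u_{xx}+g_0(u)$ on $(-1,2)\times\mathbb{R}$ and $u(-1,\cdot)\ge\frac4{11}\chi_{(-M,M)}$, then $\min\{u(0,\cdot),u(2,\cdot)\}\ge\frac3{11}\chi_{(-1,1)}$. (iv) For all large enough $K$: if $u_t=u_{xx}+g_1(u)$ on $(2,3)\times\mathbb{R}$ and $u(2,\cdot)\ge\frac2{11}\chi_{(-1,1)}$,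 then $u(3,\cdot)\ge\frac5{11}\chi_{(-4M,4M)}$.
   Context: $\chi_A$ denotes the indicator function of the set $A$. Solutions are classical solutions of the stated semilinear heat equations taking values in $[0,1]$ (the domain of $g_0,g_1$). *)

theory Defs
  imports "HOL-Analysis.Analysis"
begin

text \<open>The nonlinearities. Only their values on [0,1] matter (solutions take values in [0,1]).\<close>

definition g0 :: "real \<Rightarrow> real" where
  "g0 u = (if u \<le> 1/2 then 0 else (u - 1/2) * (1 - u) * (u - 2/3))"

definition g1 :: "real \<Rightarrow> real \<Rightarrow> real" where
  "g1 K u = (if u \<le> 1/11 then 0
             else if u < 1/2 then K * infdist u {1/11, 1/2}
             else if u \<le> 2/3 then 0
             else (u - 1/2) * (1 - u) * (u - 2/3))"

text \<open>Here u t x is the value at time t,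
  position x.\<close>

definition classical_sol :: "(real \<Rightarrow> real) \<Rightarrow> real \<Rightarrow> real \<Rightarrow> (real \<Rightarrow> real \<Rightarrow> real) \<Rightarrow> bool" where
  "classical_sol f t0 t1 u \<longleftrightarrow>
     continuous_on ({t0..t1} \<times> UNIV) (\<lambda>(t, x). u t x) \<and>
     (\<forall>t\<in>{t0..t1}. \<forall>x. u t x \<in> {0..1}) \<and>
     (\<exists>ut ux uxx :: real \<Rightarrow> real \<Rightarrow> real.
        continuous_on ({t0<..<t1} \<times> UNIV) (\<lambda>(t, x). ut t x) \<and>
        continuous_on ({t0<..<t1} \<times> UNIV) (\<lambda>(t, x). uxx t x) \<and>
        (\<forall>t\<in>{t0<..<t1}. \<forall>x.
           ((\<lambda>s. u s x) has_real_derivative ut t x) (at t) \<and>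
           ((\<lambda>y. u t y) has_real_derivative ux t x) (at x) \<and>
           ((\<lambda>y. ux t y) has_real_derivative uxx t x) (at x) \<and>
           ut t x = uxx t x + f (u t x)))"

end

theory Submission
  imports Defs
begin


lemma deriv2_max:
  fixes f f' :: "real \<Rightarrow> real"
  assumes d1: "\<And>y. (f has_real_derivative f' y) (at y)"
    and d2: "(f' has_real_derivative D) (at x)"
    and mx: "\<And>y. f y \<le> f x"
  shows "D \<le> 0"
proof (rule ccontr)
  assume "\<not> D \<le> 0"
  hence Dp: "D > 0" by simp
  have f0: "f' x = 0" using DERIV_local_max[OF d1[of x], of 1] mx by auto
  obtain d where d: "d > 0" "\<And>h. h > 0 \<Longrightarrow> h < d \<Longrightarrow> f' x < f' (x + h)"
    using DERIV_pos_inc_right[OF d2 Dp] by blast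
  have "\<exists>z. x < z \<and> z < x + d/2 \<and> f (x + d/2) - f x = (x + d/2 - x) * f' z"
    by (rule MVT2) (use d d1 in auto)
  then obtain z where z: "x < z" "z < x + d/2" "f (x + d/2) - f x = (d/2) * f' z" by auto
  have "f' z > 0" using d(2)[of "z - x"] z f0 d(1) by auto
  hence "(d/2) * f' z > 0" using d(1) by simp
  hence "f (x + d/2) - f x > 0" using z(3) by linarith
  thus False using mx[of "x + d/2"] by simp
qed

lemma max_principle:
  fixes w wt wx wxx :: "real \<Rightarrow> real \<Rightarrow> real"
  assumes tt: "t0 < t1"
    and cont: "continuous_on ({t0..t1} \<times> UNIV) (\<lambda>(t, x). w t x)"
    and bnd: "\<And>t x. t \<in> {t0..t1} \<Longrightarrow> w t x \<le> Bd"
    and init: "\<And>x. w t0 x \<le> 0"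
    and der: "\<And>t x. t \<in> {t0<..<t1} \<Longrightarrow>
           ((\<lambda>s. w s x) has_real_derivative wt t x) (at t) \<and>
           ((\<lambda>y. w t y) has_real_derivative wx t x) (at x) \<and>
           ((\<lambda>y. wx t y) has_real_derivative wxx t x) (at x)"
    and ineq: "\<And>t x. t \<in> {t0<..<t1} \<Longrightarrow> w t x > 0 \<Longrightarrow> wt t x \<le> wxx t x + L * w t x"
    and L: "L \<ge> 0"
  shows "\<forall>t\<in>{t0..t1}. \<forall>x. w t x \<le> 0"
proof (rule ccontr)
  assume "\<not> ?thesis"
  then obtain T1 x0 where T1: "T1 \<in> {t0..t1}" "w T1 x0 > 0" by (auto simp: not_le)
  have ctx: "continuous_on {t0..t1} (\<lambda>t. w t x0)"
  proof -
    have "continuous_on {t0..t1} (\<lambda>t. (\<lambda>(t, x). w t x) (t, x0))"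
      by (rule continuous_on_compose2[OF cont]) (auto intro!: continuous_intros)
    thus ?thesis by simp
  qed
  obtain T where T: "t0 < T" "T < t1" "w T x0 > 0"
  proof (cases "T1 < t1")
    case True
    moreover have "T1 \<noteq> t0" using T1 init[of x0] by auto
    ultimately show ?thesis using T1 by (intro that[of T1]) auto
  next
    case False
    hence "T1 = t1" using T1 by auto
    from ctx[unfolded continuous_on_iff, rule_format, of t1 "w t1 x0"] T1 this tt
    obtain d where d: "d > 0" "\<And>x'. x' \<in> {t0..t1} \<Longrightarrow> dist x' t1 < d \<Longrightarrow> dist (w x' x0) (w t1 x0) < w t1 x0"
      by auto
    define T' where "T' = max ((t0 + t1)/2) (t1 - d/2)"
    have "T' \<in> {t0..t1}" using tt d(1) by (auto simp: T'_def max_def)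
    moreover have "T' \<le> t1" "t1 - d/2 \<le> T'" using tt d(1) by (auto simp: T'_def max_def)
    hence "dist T' t1 < d" using d(1) by (simp add: dist_real_def)
    ultimately have "T' \<in> {t0..t1}" "dist T' t1 < d" by auto
    hence "w T' x0 > 0" using d(2)[of T'] \<open>T1 = t1\<close> T1 by (auto simp: dist_real_def)
    moreover have "t0 < T'" "T' < t1" using tt d(1) by (auto simp: T'_def max_def)
    ultimately show ?thesis using that by auto
  qed
  define lam where "lam = L + 1"
  define e where "e = (\<lambda>t. exp (- lam * (t - t0)))"
  define A where "A = e T * w T x0"
  have Apos: "A > 0" using T by (simp add: A_def e_def)
  define eps where "eps = A / (2 * (x0\<^sup>2 + 2 * (T - t0)) + 2)"
  have Dnn: "x0\<^sup>2 + 2 * (T - t0) \<ge> 0" using T by simp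
  have epos: "eps > 0" using Apos Dnn by (simp add: eps_def)
  define phi where "phi = (\<lambda>t x. e t * w t x - eps * (x\<^sup>2 + 2 * (t - t0)))"
  have phiT: "phi T x0 > 0"
  proof -
    have e1: "eps * (2 * (x0\<^sup>2 + 2 * (T - t0)) + 2) = A"
      using Dnn by (simp add: eps_def)
    have "eps * (x0\<^sup>2 + 2 * (T - t0)) < eps * (2 * (x0\<^sup>2 + 2 * (T - t0)) + 2)"
      using epos Dnn by (intro mult_strict_left_mono) auto
    hence "eps * (x0\<^sup>2 + 2 * (T - t0)) < A" using e1 by simp
    thus ?thesis by (simp add: phi_def A_def)
  qed
  define Bd' where "Bd' = max Bd 0"
  define R where "R = sqrt (Bd' / eps) + 1"
  have ew: "e t * w t x \<le> Bd'" if "t \<in> {t0..t1}" for t x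
  proof (cases "w t x > 0")
    case True
    have "(- L - 1) * (t - t0) \<le> 0" using that L by (intro mult_nonpos_nonneg) auto
    hence "e t \<le> 1" by (simp add: e_def lam_def)
    hence "e t * w t x \<le> w t x" using True by (simp add: mult_le_cancel_right1)
    thus ?thesis using bnd[OF that, of x] by (simp add: Bd'_def)
  next
    case False
    have "e t > 0" by (simp add: e_def)
    hence "e t * w t x \<le> 0" using False by (simp add: mult_nonneg_nonpos)
    thus ?thesis by (simp add: Bd'_def)
  qed
  have far: "phi t x < 0" if "t \<in> {t0..t1}" "\<bar>x\<bar> \<ge> R" for t x
  proof -
    have "sqrt (Bd' / eps) < \<bar>x\<bar>" using that by (simp add: R_def)
    hence "Bd' / eps < x\<^sup>2"
      by (metis abs_ge_zero real_less_rsqrt real_sqrt_abs real_sqrt_less_iff)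
    hence "Bd' < eps * x\<^sup>2" using epos by (simp add: field_simps)
    moreover have "eps * (2 * (t - t0)) \<ge> 0" using that epos by simp
    ultimately show ?thesis using ew[OF that(1), of x] by (simp add: phi_def algebra_simps)
  qed
  define S where "S = {t0..T} \<times> {-R..R}"
  have cS: "compact S" by (simp add: S_def compact_Times)
  have "Bd' / eps \<ge> 0" using epos by (simp add: Bd'_def)
  hence Rpos: "R > 0" by (simp add: R_def add_nonneg_pos)
  have neS: "S \<noteq> {}" using T Rpos by (auto simp: S_def)
  have contphi: "continuous_on S (\<lambda>p. phi (fst p) (snd p))"
  proof -
    have sub: "S \<subseteq> {t0..t1} \<times> UNIV" using T by (auto simp: S_def)
    have c1: "continuous_on S (\<lambda>p. w (fst p) (snd p))"
      using continuous_on_subset[OF cont sub] by (simp add: case_prod_beta')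
    show ?thesis unfolding phi_def e_def
      by (intro continuous_intros c1)
  qed
  obtain p where pS: "p \<in> S" and pmax: "\<And>q. q \<in> S \<Longrightarrow> phi (fst q) (snd q) \<le> phi (fst p) (snd p)"
    using continuous_attains_sup[OF cS neS contphi] by blast
  define ts where "ts = fst p"
  define xs where "xs = snd p"
  have x0R: "\<bar>x0\<bar> < R" using far[of T x0] phiT T by force
  have "(T, x0) \<in> S" using T x0R by (auto simp: S_def)
  hence pge: "phi ts xs \<ge> phi T x0" using pmax[of "(T,x0)"] by (simp add: ts_def xs_def)
  have tsI: "ts \<in> {t0..T}" and xsI: "xs \<in> {-R..R}" using pS by (auto simp: S_def ts_def xs_def)
  have gmax: "phi t x \<le> phi ts xs" if "t \<in> {t0..T}" for t x
  proof (cases "\<bar>x\<bar> \<ge> R")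
    case True
    thus ?thesis using far[of t x] that T phiT pge by auto
  next
    case False
    hence "(t, x) \<in> S" using that by (auto simp: S_def)
    thus ?thesis using pmax[of "(t,x)"] by (simp add: ts_def xs_def)
  qed
  have ts0: "ts \<noteq> t0"
  proof
    assume "ts = t0"
    moreover have "eps * xs\<^sup>2 \<ge> 0" using epos by simp
    ultimately have "phi ts xs \<le> 0" using init[of xs] by (simp add: phi_def e_def)
    thus False using pge phiT by simp
  qed
  have tsin: "ts \<in> {t0<..<t1}" using tsI ts0 T by auto
  have wpos: "w ts xs > 0"
  proof -
    have "phi ts xs > 0" using pge phiT by simp
    moreover have "eps * (xs\<^sup>2 + 2 * (ts - t0)) \<ge> 0" using epos tsI by simp
    ultimately have "e ts * w ts xs > 0" by (simp add: phi_def)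
    moreover have "e ts > 0" by (simp add: e_def)
    ultimately show ?thesis by (simp add: zero_less_mult_iff)
  qed
  note D = der[OF tsin]
  have ets: "e ts > 0" by (simp add: e_def)
  have dx: "((\<lambda>y. phi ts y) has_real_derivative (e ts * wx ts y - eps * (2 * y))) (at y)" for y
    unfolding phi_def using der[OF tsin, of y]
    by (auto intro!: derivative_eq_intros)
  have dxx: "((\<lambda>y. e ts * wx ts y - eps * (2 * y)) has_real_derivative (e ts * wxx ts xs - eps * 2)) (at xs)"
    using D by (auto intro!: derivative_eq_intros)
  have xle: "e ts * wxx ts xs - eps * 2 \<le> 0"
    by (rule deriv2_max[OF dx dxx]) (use gmax tsI in auto)
  have de: "(e has_real_derivative (- lam * e ts)) (at ts)"
    unfolding e_def by (auto intro!: derivative_eq_intros)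
  have dt: "((\<lambda>t. phi t xs) has_real_derivative (- lam * e ts * w ts xs + e ts * wt ts xs - eps * 2)) (at ts)"
    unfolding phi_def using D de
    by (auto intro!: derivative_eq_intros simp: algebra_simps)
  have tge: "- lam * e ts * w ts xs + e ts * wt ts xs - eps * 2 \<ge> 0"
  proof (rule ccontr)
    assume "\<not> ?thesis"
    then obtain d where d: "d > 0" "\<And>h. h > 0 \<Longrightarrow> h < d \<Longrightarrow> phi ts xs < phi (ts - h) xs"
      using DERIV_neg_dec_left[OF dt] by fastforce
    define h where "h = min (d/2) ((ts - t0)/2)"
    have "h > 0" "h < d" using d(1) tsI ts0 by (auto simp: h_def)
    hence "phi ts xs < phi (ts - h) xs" using d(2) by blast
    moreover have "h \<le> (ts - t0)/2" unfolding h_def by (rule min.cobounded2)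
    hence "ts - h \<in> {t0..T}" using tsI ts0 \<open>h > 0\<close> by auto
    ultimately show False using gmax[of "ts - h" xs] by auto
  qed
  have "wt ts xs \<le> wxx ts xs + L * w ts xs" using ineq[OF tsin wpos] .
  hence "e ts * wt ts xs \<le> e ts * wxx ts xs + L * (e ts * w ts xs)"
    using ets by (metis distrib_left mult.left_commute mult_le_cancel_left_pos)
  hence "lam * (e ts * w ts xs) \<le> L * (e ts * w ts xs)"
    using tge xle by (simp add: algebra_simps)
  moreover have "e ts * w ts xs > 0" using ets wpos by simp
  ultimately show False by (simp add: lam_def distrib_right)
qed

lemma compare_upper:
  fixes v vt vx vxx :: "real \<Rightarrow> real \<Rightarrow> real"
  assumes sol: "classical_sol f t0 t1 u" and tt: "t0 < t1"
    and vc: "continuous_on ({t0..t1} \<times> UNIV) (\<lambda>(t, x). v t x)"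
    and vb: "\<And>t x. t \<in> {t0..t1} \<Longrightarrow> v t x \<ge> Bv"
    and vd: "\<And>t x. t \<in> {t0<..<t1} \<Longrightarrow>
           ((\<lambda>s. v s x) has_real_derivative vt t x) (at t) \<and>
           ((\<lambda>y. v t y) has_real_derivative vx t x) (at x) \<and>
           ((\<lambda>y. vx t y) has_real_derivative vxx t x) (at x)"
    and init: "\<And>x. u t0 x \<le> v t0 x"
    and L: "L \<ge> 0"
    and ineq: "\<And>t x r. t \<in> {t0<..<t1} \<Longrightarrow> r \<in> {0..1} \<Longrightarrow> v t x < r \<Longrightarrow>
                 f r \<le> vt t x - vxx t x + L * (r - v t x)"
  shows "\<forall>t\<in>{t0..t1}. \<forall>x. u t x \<le> v t x"
proof -
  obtain ut ux uxx where uc: "continuous_on ({t0..t1} \<times> UNIV) (\<lambda>(t, x). u t x)"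
    and ur: "\<forall>t\<in>{t0..t1}. \<forall>x. u t x \<in> {0..1}"
    and ud: "\<forall>t\<in>{t0<..<t1}. \<forall>x.
           ((\<lambda>s. u s x) has_real_derivative ut t x) (at t) \<and>
           ((\<lambda>y. u t y) has_real_derivative ux t x) (at x) \<and>
           ((\<lambda>y. ux t y) has_real_derivative uxx t x) (at x) \<and>
           ut t x = uxx t x + f (u t x)"
    using sol unfolding classical_sol_def by blast
  have "\<forall>t\<in>{t0..t1}. \<forall>x. (\<lambda>t x. u t x - v t x) t x \<le> 0"
  proof (rule max_principle[where wt = "\<lambda>t x. ut t x - vt t x" and wx = "\<lambda>t x. ux t x - vx t x"
        and wxx = "\<lambda>t x. uxx t x - vxx t x" and Bd = "1 - Bv" and L = L, OF tt])
    show "continuous_on ({t0..t1} \<times> UNIV) (\<lambda>(t, x). u t x - v t x)"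
      using continuous_on_diff[OF uc vc] by (simp add: case_prod_beta')
    show "u t x - v t x \<le> 1 - Bv" if "t \<in> {t0..t1}" for t x
    proof -
      have "u t x \<in> {0..1}" using ur that by blast
      thus ?thesis using vb[OF that, of x] by auto
    qed
    show "u t0 x - v t0 x \<le> 0" for x using init[of x] by simp
    show "((\<lambda>s. u s x - v s x) has_real_derivative ut t x - vt t x) (at t) \<and>
          ((\<lambda>y. u t y - v t y) has_real_derivative ux t x - vx t x) (at x) \<and>
          ((\<lambda>y. ux t y - vx t y) has_real_derivative uxx t x - vxx t x) (at x)"
      if "t \<in> {t0<..<t1}" for t x
      using ud that vd[OF that, of x] by (auto intro!: derivative_eq_intros)
    show "ut t x - vt t x \<le> uxx t x - vxx t x + L * (u t x - v t x)"
      if "t \<in> {t0<..<t1}" "u t x - v t x > 0" for t x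
    proof -
      have "u t x \<in> {0..1}" using ur that(1) by auto
      hence "f (u t x) \<le> vt t x - vxx t x + L * (u t x - v t x)"
        using ineq[OF that(1)] that(2) by auto
      moreover have "ut t x = uxx t x + f (u t x)" using ud that(1) by auto
      ultimately show ?thesis by simp
    qed
  qed (use L in auto)
  thus ?thesis by simp
qed

lemma compare_lower:
  fixes v vt vx vxx :: "real \<Rightarrow> real \<Rightarrow> real"
  assumes sol: "classical_sol f t0 t1 u" and tt: "t0 < t1"
    and vc: "continuous_on ({t0..t1} \<times> UNIV) (\<lambda>(t, x). v t x)"
    and vb: "\<And>t x. t \<in> {t0..t1} \<Longrightarrow> v t x \<le> Bv"
    and vd: "\<And>t x. t \<in> {t0<..<t1} \<Longrightarrow>
           ((\<lambda>s. v s x) has_real_derivative vt t x) (at t) \<and>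
           ((\<lambda>y. v t y) has_real_derivative vx t x) (at x) \<and>
           ((\<lambda>y. vx t y) has_real_derivative vxx t x) (at x)"
    and init: "\<And>x. v t0 x \<le> u t0 x"
    and L: "L \<ge> 0"
    and ineq: "\<And>t x r. t \<in> {t0<..<t1} \<Longrightarrow> r \<in> {0..1} \<Longrightarrow> r < v t x \<Longrightarrow>
                 vt t x - vxx t x - f r \<le> L * (v t x - r)"
  shows "\<forall>t\<in>{t0..t1}. \<forall>x. v t x \<le> u t x"
proof -
  obtain ut ux uxx where uc: "continuous_on ({t0..t1} \<times> UNIV) (\<lambda>(t, x). u t x)"
    and ur: "\<forall>t\<in>{t0..t1}. \<forall>x. u t x \<in> {0..1}"
    and ud: "\<forall>t\<in>{t0<..<t1}. \<forall>x.
           ((\<lambda>s. u s x) has_real_derivative ut t x) (at t) \<and>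
           ((\<lambda>y. u t y) has_real_derivative ux t x) (at x) \<and>
           ((\<lambda>y. ux t y) has_real_derivative uxx t x) (at x) \<and>
           ut t x = uxx t x + f (u t x)"
    using sol unfolding classical_sol_def by blast
  have "\<forall>t\<in>{t0..t1}. \<forall>x. (\<lambda>t x. v t x - u t x) t x \<le> 0"
  proof (rule max_principle[where wt = "\<lambda>t x. vt t x - ut t x" and wx = "\<lambda>t x. vx t x - ux t x"
        and wxx = "\<lambda>t x. vxx t x - uxx t x" and Bd = "Bv" and L = L, OF tt])
    show "continuous_on ({t0..t1} \<times> UNIV) (\<lambda>(t, x). v t x - u t x)"
      using continuous_on_diff[OF vc uc] by (simp add: case_prod_beta')
    show "v t x - u t x \<le> Bv" if "t \<in> {t0..t1}" for t x
    proof -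
      have "u t x \<in> {0..1}" using ur that by blast
      thus ?thesis using vb[OF that, of x] by auto
    qed
    show "v t0 x - u t0 x \<le> 0" for x using init[of x] by simp
    show "((\<lambda>s. v s x - u s x) has_real_derivative vt t x - ut t x) (at t) \<and>
          ((\<lambda>y. v t y - u t y) has_real_derivative vx t x - ux t x) (at x) \<and>
          ((\<lambda>y. vx t y - ux t y) has_real_derivative vxx t x - uxx t x) (at x)"
      if "t \<in> {t0<..<t1}" for t x
      using ud that vd[OF that, of x] by (auto intro!: derivative_eq_intros)
    show "vt t x - ut t x \<le> vxx t x - uxx t x + L * (v t x - u t x)"
      if "t \<in> {t0<..<t1}" "v t x - u t x > 0" for t x
    proof -
      have "u t x \<in> {0..1}" using ur that(1) by auto
      hence "vt t x - vxx t x - f (u t x) \<le> L * (v t x - u t x)"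
        using ineq[OF that(1)] that(2) by auto
      moreover have "ut t x = uxx t x + f (u t x)" using ud that(1) by auto
      ultimately show ?thesis by simp
    qed
  qed (use L in auto)
  thus ?thesis by simp
qed

lemma part3:
  assumes sol: "classical_sol g0 (-1) 2 u"
    and init: "\<forall>x. u (-1) x \<ge> 4/11 * indicator {-20<..<20} x"
  shows "\<forall>x. min (u 0 x) (u 2 x) \<ge> 3/11 * indicator {-1<..<1} x"
proof -
  define v where "v = (\<lambda>t x::real. 4/11 - (x\<^sup>2 + 2 * (t + 1)) / 1100)"
  have cmp: "\<forall>t\<in>{-1..2}. \<forall>x. v t x \<le> u t x"
  proof (rule compare_lower[OF sol, where vt = "\<lambda>t x. - 2/1100" and vx = "\<lambda>t x. - 2 * x / 1100"
      and vxx = "\<lambda>t x. - 2/1100" and Bv = "4/11" and L = 0])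
    show "continuous_on ({-1..2} \<times> UNIV) (\<lambda>(t, x). v t x)"
      unfolding v_def by (auto simp: case_prod_beta' intro!: continuous_intros)
    show "v t x \<le> 4/11" if "t \<in> {-1..2}" for t x
      using that by (auto simp: v_def)
    show "((\<lambda>s. v s x) has_real_derivative - 2/1100) (at t) \<and>
          ((\<lambda>y. v t y) has_real_derivative - 2 * x / 1100) (at x) \<and>
          ((\<lambda>y. - 2 * y / 1100) has_real_derivative - 2/1100) (at x)" for t x
      unfolding v_def by (auto intro!: derivative_eq_intros)
    show "v (-1) x \<le> u (-1) x" for x
    proof (cases "x \<in> {-20<..<20}")
      case True
      hence "u (-1) x \<ge> 4/11" using init[rule_format, of x] by auto
      moreover have "v (-1) x \<le> 4/11" by (simp add: v_def)
      ultimately show ?thesis by linarith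
    next
      case False
      hence "20 \<le> \<bar>x\<bar>" by auto
      hence "20\<^sup>2 \<le> \<bar>x\<bar>\<^sup>2" by (rule power_mono) simp
      hence "x\<^sup>2 \<ge> 400" by simp
      hence "v (-1) x \<le> 0" by (simp add: v_def)
      moreover have "u (-1) x \<ge> 0" using sol by (auto simp: classical_sol_def)
      ultimately show ?thesis by simp
    qed
    show "- 2 / 1100 - - 2 / 1100 - g0 r \<le> 0 * (v t x - r)"
      if "t \<in> {-1<..<2}" "r \<in> {0..1}" "r < v t x" for t x r
    proof -
      have "v t x \<le> 4/11" using that(1) by (auto simp: v_def)
      hence "g0 r = 0" using that(3) by (simp add: g0_def)
      thus ?thesis by simp
    qed
  qed auto
  show ?thesis
  proof
    fix x
    have u01: "u 0 x \<ge> 0" "u 2 x \<ge> 0" using sol by (auto simp: classical_sol_def)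
    show "min (u 0 x) (u 2 x) \<ge> 3/11 * indicator {-1<..<1} x"
    proof (cases "x \<in> {-1<..<1}")
      case True
      hence "x\<^sup>2 < 1" by (simp add: abs_square_less_1 abs_less_iff)
      hence "v 0 x \<ge> 3/11" "v 2 x \<ge> 3/11" by (auto simp: v_def)
      moreover have "v 0 x \<le> u 0 x" "v 2 x \<le> u 2 x" using cmp by auto
      ultimately show ?thesis using True by auto
    next
      case False thus ?thesis using u01 by simp
    qed
  qed
qed




definition P3 :: "real \<Rightarrow> real" where "P3 u = (u - 1/2) * (1 - u) * (u - 2/3)"

lemma P3_lip: assumes "0 \<le> v" "v \<le> r" "r \<le> 1" shows "P3 r - P3 v \<le> 5 * (r - v)"
proof -
  have eq: "P3 r - P3 v = (r - v) * (-(r\<^sup>2 + r * v + v\<^sup>2) + 13/6 * (r + v) - 3/2)"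
    unfolding P3_def power2_eq_square by algebra
  have "r\<^sup>2 + r * v + v\<^sup>2 \<ge> 0" using assms by simp
  moreover have "13/6 * (r + v) \<le> 13/6 * 2" using assms by (intro mult_left_mono) auto
  ultimately have "-(r\<^sup>2 + r * v + v\<^sup>2) + 13/6 * (r + v) - 3/2 \<le> 5" by linarith
  hence "(r - v) * (-(r\<^sup>2 + r * v + v\<^sup>2) + 13/6 * (r + v) - 3/2) \<le> (r - v) * 5"
    using assms by (intro mult_left_mono) auto
  thus ?thesis using eq by simp
qed

lemma g0_P3: "u > 1/2 \<Longrightarrow> g0 u = P3 u" by (simp add: g0_def P3_def)

lemma g0_lip: assumes "1/2 \<le> v" "v \<le> r" "r \<le> 1" shows "g0 r - g0 v \<le> 5 * (r - v)"
proof -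
  have e: "g0 x = P3 x" if "x \<ge> 1/2" for x
    using that by (cases "x = 1/2") (auto simp: g0_def P3_def)
  show ?thesis using P3_lip[of v r] assms e[of r] e[of v] by auto
qed

lemma P3_le: assumes "u \<le> 1" "1/2 \<le> u" shows "P3 u \<le> 1/72"
proof (cases "u \<ge> 2/3")
  case True
  have a: "(1 - u) * (u - 2/3) \<le> 1/36"
  proof -
    have "0 \<le> ((1 - u) - (u - 2/3))\<^sup>2" by simp
    moreover have "(1 - u) * (u - 2/3) = 1/36 - ((1 - u) - (u - 2/3))\<^sup>2 / 4"
      by (simp add: power2_eq_square field_simps)
    ultimately show ?thesis by linarith
  qed
  have b: "(1 - u) * (u - 2/3) \<ge> 0" using True assms by simp
  have "P3 u = (u - 1/2) * ((1 - u) * (u - 2/3))" by (simp add: P3_def)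
  also have "\<dots> \<le> (1/2) * (1/36)" using True assms a b by (intro mult_mono) auto
  finally show ?thesis by simp
next
  case False
  have "(u - 1/2) * (1 - u) \<ge> 0" using assms by simp
  moreover have "u - 2/3 \<le> 0" using False by simp
  ultimately have "P3 u \<le> 0" unfolding P3_def by (simp add: mult_nonneg_nonpos)
  thus ?thesis by simp
qed

lemma P3_neg: assumes "5/8 - 1/1000 \<le> u" "u \<le> 5/8 + 1/64" shows "P3 u \<le> - 1/1000"
proof -
  have a: "(u - 1/2) * (1 - u) \<ge> (124/1000) * (359/1000)"
    using assms by (intro mult_mono) auto
  have b: "2/3 - u \<ge> 25/1000" using assms by simp
  have "(u - 1/2) * (1 - u) * (2/3 - u) \<ge> (124/1000) * (359/1000) * (25/1000)"
    using a b assms by (intro mult_mono) auto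
  hence "P3 u \<le> - ((124/1000) * (359/1000) * (25/1000))"
    by (simp add: P3_def algebra_simps)
  thus ?thesis by simp
qed

lemma g1_hi: assumes "1/2 \<le> u" "u \<le> 1" shows "g1 K u = max 0 (P3 u)"
proof (cases "u \<le> 2/3")
  case True
  have "(u - 1/2) * (1 - u) \<ge> 0" using assms by simp
  hence "P3 u \<le> 0" unfolding P3_def using True by (simp add: mult_nonneg_nonpos)
  thus ?thesis using True assms by (auto simp: g1_def)
next
  case False
  have "(u - 1/2) * (1 - u) \<ge> 0" using assms by simp
  hence "P3 u \<ge> 0" unfolding P3_def using False by simp
  thus ?thesis using False assms by (auto simp: g1_def P3_def)
qed

lemma g1_lip: assumes "1/2 \<le> v" "v \<le> r" "r \<le> 1" shows "g1 K r - g1 K v \<le> 5 * (r - v)"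
  using g1_hi[of r K] g1_hi[of v K] P3_lip[of v r] assms by auto

lemma exp_nat_ge: "exp (real n) \<ge> 2 ^ n"
proof -
  have "exp (real n) = exp 1 ^ n" using exp_of_nat_mult[of n 1] by simp
  moreover have "exp (1::real) \<ge> 2" using exp_ge_add_one_self[of 1] by simp
  ultimately show ?thesis by (simp add: power_mono)
qed




definition rho :: "real \<Rightarrow> real" where "rho x = sqrt (x\<^sup>2 + 1/10000)"

lemma sqpos: "x\<^sup>2 + 1/10000 > (0::real)"
proof -
  have "x\<^sup>2 \<ge> 0" by simp
  thus ?thesis by linarith
qed
lemma rho_pos: "rho x > 0" using sqpos[of x] by (simp add: rho_def)
lemma rho_sq: "(rho x)\<^sup>2 = x\<^sup>2 + 1/10000" using sqpos[of x] by (simp add: rho_def)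

lemma rho_d: "(rho has_real_derivative x / rho x) (at x)"
proof -
  have p: "x\<^sup>2 + 1/10000 > 0" by (rule sqpos)
  show ?thesis unfolding rho_def
    using p by (auto intro!: derivative_eq_intros simp: field_simps power2_eq_square)
qed

lemma rho'_d: "((\<lambda>y. y / rho y) has_real_derivative (1/10000) / rho x ^ 3) (at x)"
proof -
  have "((\<lambda>y. y / rho y) has_real_derivative (1 * rho x - x * (x / rho x)) / (rho x * rho x)) (at x)"
    using rho_pos[of x] by (auto intro!: derivative_eq_intros rho_d)
  moreover have "(1 * rho x - x * (x / rho x)) / (rho x * rho x) = (1/10000) / rho x ^ 3"
  proof -
    have R: "rho x > 0" by (rule rho_pos)
    have "1 * rho x - x * (x / rho x) = ((rho x)\<^sup>2 - x\<^sup>2) / rho x"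
      using R by (simp add: field_simps power2_eq_square)
    also have "\<dots> = (1/10000) / rho x" using rho_sq[of x] by simp
    finally show ?thesis using R by (simp add: power3_eq_cube)
  qed
  ultimately show ?thesis by simp
qed

definition Cf :: "real \<Rightarrow> real" where "Cf t = 497/500 + 80009/1000 * (t - 2)"
definition Wf :: "real \<Rightarrow> real \<Rightarrow> real" where "Wf t x = exp (- (1000 * (rho x - Cf t)))"
definition Bf :: "real \<Rightarrow> real" where "Bf t = 411/2200 + 667/2200 * (t - 2)"
definition v4 :: "real \<Rightarrow> real \<Rightarrow> real" where "v4 t x = Bf t * (1 - exp (- Wf t x)) - 1/200"

definition v4t :: "real \<Rightarrow> real \<Rightarrow> real" where
  "v4t t x = 667/2200 * (1 - exp (- Wf t x)) + Bf t * exp (- Wf t x) * Wf t x * 80009"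
definition v4x :: "real \<Rightarrow> real \<Rightarrow> real" where
  "v4x t x = - (Bf t * exp (- Wf t x) * Wf t x * 1000 * (x / rho x))"
definition v4xx :: "real \<Rightarrow> real \<Rightarrow> real" where
  "v4xx t x = Bf t * exp (- Wf t x) * Wf t x * (1000000 * (x / rho x)\<^sup>2 * (1 - Wf t x) - (1/10) / rho x ^ 3)"

lemma Wf_dt: "((\<lambda>s. Wf s x) has_real_derivative Wf t x * 80009) (at t)"
  unfolding Wf_def Cf_def by (auto intro!: derivative_eq_intros simp: algebra_simps)

lemma Wf_dx: "((\<lambda>y. Wf t y) has_real_derivative - (Wf t x * 1000 * (x / rho x))) (at x)"
  unfolding Wf_def by (auto intro!: derivative_eq_intros rho_d simp: algebra_simps)

lemma Bf_d: "(Bf has_real_derivative 667/2200) (at t)"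
  unfolding Bf_def by (auto intro!: derivative_eq_intros)

lemma v4_dt: "((\<lambda>s. v4 s x) has_real_derivative v4t t x) (at t)"
proof -
  have "((\<lambda>s. v4 s x) has_real_derivative 667/2200 * (1 - exp (- Wf t x)) + Bf t * (- (exp (- Wf t x) * (- (Wf t x * 80009))))) (at t)"
    unfolding v4_def by (auto intro!: derivative_eq_intros Wf_dt Bf_d)
  thus ?thesis by (simp add: v4t_def algebra_simps)
qed

lemma v4_dx: "((\<lambda>y. v4 t y) has_real_derivative v4x t x) (at x)"
proof -
  have "((\<lambda>y. v4 t y) has_real_derivative Bf t * (- (exp (- Wf t x) * (- (- (Wf t x * 1000 * (x / rho x))))))) (at x)"
    unfolding v4_def by (auto intro!: derivative_eq_intros Wf_dx)
  thus ?thesis by (simp add: v4x_def algebra_simps)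
qed

lemma v4_dxx: "((\<lambda>y. v4x t y) has_real_derivative v4xx t x) (at x)"
proof -
  have d1: "((\<lambda>y. exp (- Wf t y) * Wf t y) has_real_derivative
      exp (- Wf t x) * (- (- (Wf t x * 1000 * (x / rho x)))) * Wf t x + exp (- Wf t x) * (- (Wf t x * 1000 * (x / rho x)))) (at x)"
    by (auto intro!: derivative_eq_intros Wf_dx)
  have d2: "((\<lambda>y. (exp (- Wf t y) * Wf t y) * (y / rho y)) has_real_derivative
      (exp (- Wf t x) * (- (- (Wf t x * 1000 * (x / rho x)))) * Wf t x + exp (- Wf t x) * (- (Wf t x * 1000 * (x / rho x)))) * (x / rho x)
      + (exp (- Wf t x) * Wf t x) * ((1/10000) / rho x ^ 3)) (at x)"
    using DERIV_mult'[OF d1 rho'_d] by (simp add: algebra_simps)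
  have d3: "((\<lambda>y. - (Bf t * 1000) * ((exp (- Wf t y) * Wf t y) * (y / rho y))) has_real_derivative
      - (Bf t * 1000) * ((exp (- Wf t x) * (- (- (Wf t x * 1000 * (x / rho x)))) * Wf t x + exp (- Wf t x) * (- (Wf t x * 1000 * (x / rho x)))) * (x / rho x)
      + (exp (- Wf t x) * Wf t x) * ((1/10000) / rho x ^ 3))) (at x)"
    by (rule DERIV_cmult[OF d2])
  have e1: "(\<lambda>y. v4x t y) = (\<lambda>y. - (Bf t * 1000) * ((exp (- Wf t y) * Wf t y) * (y / rho y)))"
    by (rule ext) (simp add: v4x_def algebra_simps)
  have e2: "- (Bf t * 1000) * ((exp (- Wf t x) * (- (- (Wf t x * 1000 * (x / rho x)))) * Wf t x + exp (- Wf t x) * (- (Wf t x * 1000 * (x / rho x)))) * (x / rho x)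
      + (exp (- Wf t x) * Wf t x) * ((1/10000) / rho x ^ 3)) = v4xx t x"
    using rho_pos[of x] unfolding v4xx_def by (simp add: field_simps power2_eq_square)
  show ?thesis using d3 unfolding e1 e2 .
qed




lemma sol_range: "classical_sol f t0 t1 u \<Longrightarrow> t0 \<le> t \<Longrightarrow> t \<le> t1 \<Longrightarrow> 0 \<le> u t x \<and> u t x \<le> 1"
  unfolding classical_sol_def by auto

lemma part1:
  assumes sol: "classical_sol g0 0 1 u"
    and init: "\<forall>x. u 0 x \<le> indicator {..0} x + 5/8 * indicator {0<..} x"
  shows "\<forall>x. u 1 x \<le> indicator {..20} x + (5/8 - 2*(1/4000)) * indicator {20<..} x"
proof -
  define v where "v = (\<lambda>t x::real. 5/8 - t/1000 + 3/8 * exp (2*t - x))"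
  have cmp: "\<forall>t\<in>{0..1}. \<forall>x. u t x \<le> v t x"
  proof (rule compare_upper[OF sol, where vt = "\<lambda>t x. - 1/1000 + 3/4 * exp (2*t - x)"
      and vx = "\<lambda>t x. - (3/8 * exp (2*t - x))"
      and vxx = "\<lambda>t x. 3/8 * exp (2*t - x)" and Bv = "5/8 - 1/1000" and L = 5])
    show "continuous_on ({0..1} \<times> UNIV) (\<lambda>(t, x). v t x)"
      unfolding v_def by (auto simp: case_prod_beta' intro!: continuous_intros)
    show "v t x \<ge> 5/8 - 1/1000" if "t \<in> {0..1}" for t x
    proof -
      have "3/8 * exp (2*t - x) > 0" by simp
      moreover have "t/1000 \<le> 1/1000" using that by auto
      ultimately show ?thesis unfolding v_def by linarith
    qed
    show "((\<lambda>s. v s x) has_real_derivative - 1/1000 + 3/4 * exp (2*t - x)) (at t) \<and>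
          ((\<lambda>y. v t y) has_real_derivative - (3/8 * exp (2*t - x))) (at x) \<and>
          ((\<lambda>y. - (3/8 * exp (2*t - y))) has_real_derivative 3/8 * exp (2*t - x)) (at x)" for t x
      unfolding v_def by (auto intro!: derivative_eq_intros)
    show "u 0 x \<le> v 0 x" for x
    proof (cases "x \<le> 0")
      case True
      have "exp (- x) \<ge> 1" using True by simp
      moreover have "v 0 x = 5/8 + 3/8 * exp (- x)" by (simp add: v_def)
      ultimately have "v 0 x \<ge> 1" by linarith
      moreover have "u 0 x \<le> 1" using sol_range[OF sol, of 0 x] by simp
      ultimately show ?thesis by simp
    next
      case False
      have "exp (- x) > 0" by simp
      hence "v 0 x \<ge> 5/8" by (simp add: v_def)
      moreover have "u 0 x \<le> 5/8" using init[rule_format, of x] False by simp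
      ultimately show ?thesis by simp
    qed
    show "g0 r \<le> - 1/1000 + 3/4 * exp (2*t - x) - 3/8 * exp (2*t - x) + 5 * (r - v t x)"
      if "t \<in> {0<..<1}" "r \<in> {0..1}" "v t x < r" for t x r
    proof -
      define e where "e = 3/8 * exp (2*t - x)"
      have ep: "e > 0" by (simp add: e_def)
      have vv: "v t x = 5/8 - t/1000 + e" by (simp add: v_def e_def)
      have vlo: "v t x \<ge> 5/8 - 1/1000" using that(1) ep vv by auto
      have lip: "g0 r - g0 (v t x) \<le> 5 * (r - v t x)"
        by (rule g0_lip) (use that vlo in auto)
      have "g0 (v t x) \<le> e - 1/1000"
      proof (cases "e \<ge> 1/64")
        case True
        have "g0 (v t x) = P3 (v t x)" using vlo by (simp add: g0_P3)
        also have "\<dots> \<le> 1/72" by (rule P3_le) (use that vlo in auto)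
        finally show ?thesis using True by simp
      next
        case False
        have "g0 (v t x) = P3 (v t x)" using vlo by (simp add: g0_P3)
        also have "\<dots> \<le> - 1/1000" by (rule P3_neg) (use that vv vlo False in auto)
        finally show ?thesis using ep by simp
      qed
      thus ?thesis using lip by (simp add: e_def)
    qed
  qed auto
  show ?thesis
  proof
    fix x
    show "u 1 x \<le> indicator {..20} x + (5/8 - 2*(1/4000)) * indicator {20<..} x"
    proof (cases "x \<le> 20")
      case True
      moreover have "u 1 x \<le> 1" using sol_range[OF sol, of 1 x] by simp
      ultimately show ?thesis by simp
    next
      case False
      have "exp (2 - x) \<le> exp (- 18)" using False by simp
      moreover have "exp (- 18) = 1 / exp (real 18)" by (simp add: exp_minus field_simps)
      moreover have "exp (real 18) \<ge> 2^18" by (rule exp_nat_ge)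
      moreover have "1 / exp (real 18) \<le> 1 / 2^18"
        by (rule divide_left_mono) (use \<open>exp (real 18) \<ge> 2^18\<close> in auto)
      ultimately have "exp (2 - x) \<le> 1 / 2^18" by linarith
      hence "v 1 x \<le> 5/8 - 2*(1/4000)" by (simp add: v_def)
      moreover have "u 1 x \<le> v 1 x" using cmp by auto
      ultimately show ?thesis using False by simp
    qed
  qed
qed

lemma part2:
  assumes K: "K \<ge> 0" and sol: "classical_sol (g1 K) 1 4 u"
    and init: "\<forall>x. u 1 x \<le> indicator {..20} x + (5/8 - 2*(1/4000)) * indicator {20<..} x"
  shows "\<forall>x. u 4 x \<le> indicator {..2*20} x + (5/8 - 1/4000) * indicator {2*20<..} x"
proof -
  define v where "v = (\<lambda>t x::real. 5/8 - 1/2000 + (3/8 + 1/2000) * exp (2*(t - 1) - (x - 20)))"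
  have cmp: "\<forall>t\<in>{1..4}. \<forall>x. u t x \<le> v t x"
  proof (rule compare_upper[OF sol, where vt = "\<lambda>t x. 2 * ((3/8 + 1/2000) * exp (2*(t - 1) - (x - 20)))"
      and vx = "\<lambda>t x. - ((3/8 + 1/2000) * exp (2*(t - 1) - (x - 20)))"
      and vxx = "\<lambda>t x. (3/8 + 1/2000) * exp (2*(t - 1) - (x - 20))" and Bv = "5/8 - 1/2000" and L = 5])
    show "continuous_on ({1..4} \<times> UNIV) (\<lambda>(t, x). v t x)"
      unfolding v_def by (auto simp: case_prod_beta' intro!: continuous_intros)
    show "v t x \<ge> 5/8 - 1/2000" if "t \<in> {1..4}" for t x
    proof -
      have "exp (2*(t - 1) - (x - 20)) > 0" by simp
      thus ?thesis by (auto simp: v_def)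
    qed
    show "((\<lambda>s. v s x) has_real_derivative 2 * ((3/8 + 1/2000) * exp (2*(t - 1) - (x - 20)))) (at t) \<and>
          ((\<lambda>y. v t y) has_real_derivative - ((3/8 + 1/2000) * exp (2*(t - 1) - (x - 20)))) (at x) \<and>
          ((\<lambda>y. - ((3/8 + 1/2000) * exp (2*(t - 1) - (y - 20)))) has_real_derivative (3/8 + 1/2000) * exp (2*(t - 1) - (x - 20))) (at x)" for t x
      unfolding v_def by (auto intro!: derivative_eq_intros)
    show "u 1 x \<le> v 1 x" for x
    proof (cases "x \<le> 20")
      case True
      have "exp (20 - x) \<ge> 1" using True by simp
      hence "(3/8 + 1/2000) * exp (20 - x) \<ge> (3/8 + 1/2000)" by simp
      moreover have "v 1 x = 5/8 - 1/2000 + (3/8 + 1/2000) * exp (20 - x)" by (simp add: v_def)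
      ultimately have "v 1 x \<ge> 1" by linarith
      moreover have "u 1 x \<le> 1" using sol_range[OF sol, of 1 x] by simp
      ultimately show ?thesis by simp
    next
      case False
      have "(3/8 + 1/2000) * exp (20 - x) > 0" by simp
      moreover have "v 1 x = 5/8 - 1/2000 + (3/8 + 1/2000) * exp (20 - x)" by (simp add: v_def)
      ultimately have "v 1 x \<ge> 5/8 - 1/2000" by linarith
      moreover have "u 1 x \<le> 5/8 - 1/2000" using init[rule_format, of x] False by simp
      ultimately show ?thesis by simp
    qed
    show "g1 K r \<le> 2 * ((3/8 + 1/2000) * exp (2*(t - 1) - (x - 20))) - (3/8 + 1/2000) * exp (2*(t - 1) - (x - 20)) + 5 * (r - v t x)"
      if "t \<in> {1<..<4}" "r \<in> {0..1}" "v t x < r" for t x r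
    proof -
      define e where "e = (3/8 + 1/2000) * exp (2*(t - 1) - (x - 20))"
      have ep: "e > 0" by (simp add: e_def)
      have vv: "v t x = 5/8 - 1/2000 + e" by (simp add: v_def e_def)
      have vlo: "v t x \<ge> 5/8 - 1/2000" using ep vv by auto
      have lip: "g1 K r - g1 K (v t x) \<le> 5 * (r - v t x)"
        by (rule g1_lip) (use that vlo in auto)
      have "g1 K (v t x) \<le> e"
      proof (cases "v t x \<le> 2/3")
        case True
        thus ?thesis using vlo ep by (simp add: g1_def)
      next
        case False
        have "g1 K (v t x) = max 0 (P3 (v t x))" by (rule g1_hi) (use that vlo in auto)
        moreover have "P3 (v t x) \<le> 1/72" by (rule P3_le) (use that vlo in auto)
        moreover have "e \<ge> 1/24" using False vv by simp
        ultimately show ?thesis using ep by simp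
      qed
      thus ?thesis using lip by (simp add: e_def)
    qed
  qed (use K in auto)
  show ?thesis
  proof
    fix x
    show "u 4 x \<le> indicator {..2*20} x + (5/8 - 1/4000) * indicator {2*20<..} x"
    proof (cases "x \<le> 40")
      case True
      moreover have "u 4 x \<le> 1" using sol_range[OF sol, of 4 x] by simp
      ultimately show ?thesis by simp
    next
      case False
      have "exp (2*(4-1) - (x - 20)) \<le> exp (- 14)" using False by simp
      moreover have "exp (- 14) = 1 / exp (real 14)" by (simp add: exp_minus field_simps)
      moreover have "exp (real 14) \<ge> 2^14" by (rule exp_nat_ge)
      moreover have "1 / exp (real 14) \<le> 1 / 2^14"
        by (rule divide_left_mono) (use \<open>exp (real 14) \<ge> 2^14\<close> in auto)
      ultimately have "exp (2*(4-1) - (x - 20)) \<le> 1 / 2^14" by linarith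
      hence "v 4 x \<le> 5/8 - 1/4000" by (simp add: v_def)
      moreover have "u 4 x \<le> v 4 x" using cmp by auto
      ultimately show ?thesis using False by simp
    qed
  qed
qed




lemma infdist2: "infdist v {a, b} = min (\<bar>v - a\<bar>) (\<bar>v - b\<bar>)"
proof -
  have "{a, b} = {a} \<union> {b}" by auto
  thus ?thesis using infdist_Un_min[of "{a}" "{b}" v] by (simp add: dist_real_def)
qed

lemma g1_lo_lip: assumes "K \<ge> 0" "0 \<le> r" "r \<le> v" "v < 1/2" shows "g1 K v - g1 K r \<le> K * (v - r)"
proof -
  define G where "G = (\<lambda>u::real. if u \<le> 1/11 then 0 else min (\<bar>u - 1/11\<bar>) (\<bar>u - 1/2\<bar>))"
  have g: "g1 K u = K * G u" if "u < 1/2" for u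
    using that by (auto simp: g1_def G_def infdist2)
  have "G v - G r \<le> v - r" using assms by (auto simp: G_def)
  hence "K * (G v - G r) \<le> K * (v - r)" using assms by (intro mult_left_mono) auto
  thus ?thesis using g[of v] g[of r] assms by (simp add: algebra_simps)
qed

lemma g1_nonneg: assumes "K \<ge> 0" "u < 1/2" shows "g1 K u \<ge> 0"
  using assms by (auto simp: g1_def infdist_nonneg)

lemma g1_mid: assumes "K \<ge> 0" "1/11 + 1/200 \<le> u" "u \<le> 1/2 - 1/200" shows "g1 K u \<ge> K / 200"
proof -
  have "g1 K u = K * min (\<bar>u - 1/11\<bar>) (\<bar>u - 1/2\<bar>)" using assms by (auto simp: g1_def infdist2)
  moreover have "min (\<bar>u - 1/11\<bar>) (\<bar>u - 1/2\<bar>) \<ge> 1/200" using assms by auto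
  ultimately show ?thesis using assms(1) mult_left_mono[of "1/200" _ K] by auto
qed

lemma FW_le: fixes W :: real assumes "W \<ge> 0" shows "exp (- W) * W \<le> 1"
proof -
  have "exp W \<ge> 1 + W" by (rule exp_ge_add_one_self)
  hence "W \<le> exp W" by linarith
  thus ?thesis by (simp add: exp_minus field_simps)
qed

lemma FW2_le: fixes W :: real assumes "W \<ge> 0" shows "exp (- W) * W * W \<le> 4"
proof -
  have "exp (W/2) \<ge> 1 + W/2" by simp
  hence "exp (W/2) * exp (W/2) \<ge> (1 + W/2) * (1 + W/2)" using assms by (intro mult_mono) auto
  moreover have "exp (W/2) * exp (W/2) = exp W" by (simp flip: exp_add)
  moreover have "(1 + W/2) * (1 + W/2) \<ge> W * W / 4" using assms by (simp add: field_simps)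
  ultimately have "W * W \<le> 4 * exp W" by simp
  thus ?thesis by (simp add: exp_minus field_simps)
qed

lemma exp45: "exp (- (4/5::real)) < 189/411"
proof -
  have "exp (4/5::real) = exp (1/25) ^ 20" using exp_of_nat_mult[of 20 "1/25::real"] by simp
  moreover have "exp (1/25::real) \<ge> 1 + 1/25" by (rule exp_ge_add_one_self)
  hence "exp (1/25::real) ^ 20 \<ge> (26/25) ^ 20" by (intro power_mono) auto
  ultimately have "exp (4/5::real) \<ge> (26/25)^20" by simp
  moreover have "(26/25::real)^20 > 411/189" by (simp add: power_divide)
  ultimately have "exp (4/5::real) > 411/189" by linarith
  thus ?thesis by (simp add: exp_minus field_simps)
qed




lemma v4_ineq:
  assumes K: "K \<ge> 10^9" and t: "t \<in> {2<..<3}" and r: "r \<in> {0..1}" and rv: "r < v4 t x"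
  shows "v4t t x - v4xx t x - g1 K r \<le> K * (v4 t x - r)"
proof -
  define W where "W = Wf t x"
  define F where "F = exp (- W)"
  define R where "R = rho x"
  define q where "q = x / R"
  define B where "B = Bf t"
  have Wp: "W > 0" by (simp add: W_def Wf_def)
  have Fp: "F > 0" by (simp add: F_def)
  have F1: "F \<le> 1" using Wp by (simp add: F_def)
  have Rp: "R > 0" by (simp add: R_def rho_pos)
  have R2: "R\<^sup>2 = x\<^sup>2 + 1/10000" by (simp add: R_def rho_sq)
  have Bl: "B \<ge> 411/2200" "B \<le> 49/100" using t by (auto simp: B_def Bf_def field_simps)
  have vv: "v4 t x = B * (1 - F) - 1/200" by (simp add: v4_def B_def F_def W_def)
  have vhi: "v4 t x \<le> 1/2 - 1/200"
  proof -
    have "B * (1 - F) \<le> B * 1" using Bl Fp by (intro mult_left_mono) auto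
    thus ?thesis using vv Bl by linarith
  qed
  have Kp: "K \<ge> 0" using K by simp
  have lip: "g1 K (v4 t x) - g1 K r \<le> K * (v4 t x - r)"
    by (rule g1_lo_lip) (use Kp r rv vhi in auto)
  have diff: "v4t t x - v4xx t x = 667/2200 * (1 - F) + B * (F * W) * 80009 + B * (F * W) * ((1/10) / R ^ 3)
                - 1000000 * B * q\<^sup>2 * (F * W - F * W * W)"
    by (simp add: v4t_def v4xx_def F_def W_def B_def q_def R_def algebra_simps)
  have q2: "q\<^sup>2 \<le> 1"
  proof -
    have "x\<^sup>2 \<le> R\<^sup>2" using R2 by simp
    thus ?thesis using Rp by (simp add: q_def power_divide)
  qed
  have main: "v4t t x - v4xx t x \<le> g1 K (v4 t x)"
  proof (cases "v4 t x \<ge> 1/11 + 1/200")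
    case True
    have g: "g1 K (v4 t x) \<ge> K / 200" by (rule g1_mid) (use Kp True vhi in auto)
    have FW: "F * W \<le> 1" "F * W \<ge> 0" using FW_le[of W] Wp Fp by (auto simp: F_def)
    have FWW: "F * W * W \<le> 4" "F * W * W \<ge> 0" using FW2_le[of W] Wp Fp by (auto simp: F_def)
    have R3: "(1/10) / R ^ 3 \<le> 100000"
    proof -
      have "x\<^sup>2 \<ge> 0" by simp
      hence "R\<^sup>2 \<ge> (1/100)\<^sup>2" using R2 by (simp add: power_divide)
      hence "R \<ge> 1/100" using Rp by (simp add: power2_le_iff_abs_le abs_le_square_iff)
      hence "R ^ 3 \<ge> (1/100) ^ 3" by (intro power_mono) auto
      thus ?thesis using Rp by (simp add: field_simps)
    qed
    have R3n: "(1/10) / R ^ 3 \<ge> 0" using Rp by simp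
    have t1: "667/2200 * (1 - F) \<le> 1" using Fp F1 by simp
    have t2: "B * (F * W) * 80009 \<le> 1/2 * 1 * 80009"
      using Bl FW by (intro mult_right_mono mult_mono) auto
    have t3: "B * (F * W) * ((1/10) / R ^ 3) \<le> 1/2 * 1 * 100000"
      using Bl FW R3 R3n by (intro mult_mono) auto
    have t4: "- (1000000 * B * q\<^sup>2 * (F * W - F * W * W)) \<le> 1000000 * B * q\<^sup>2 * (F * W * W)"
    proof -
      have "1000000 * B * q\<^sup>2 * (F * W) \<ge> 0" using Bl FW by simp
      thus ?thesis by (simp add: algebra_simps)
    qed
    have t5: "1000000 * B * q\<^sup>2 * (F * W * W) \<le> 1000000 * (1/2) * 1 * 4"
      using Bl q2 FWW by (intro mult_mono) auto
    have "v4t t x - v4xx t x \<le> 3000000" using diff t1 t2 t3 t4 t5 by linarith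
    also have "\<dots> \<le> K / 200" using K by simp
    finally show ?thesis using g by linarith
  next
    case False
    have vpos: "v4 t x > 0" using rv r by auto
    have gnn: "g1 K (v4 t x) \<ge> 0" by (rule g1_nonneg) (use Kp vhi in auto)
    have "B * (1 - F) < 111/1100" using False vv by simp
    moreover have "B * (1 - F) \<ge> 411/2200 * (1 - F)" using Bl F1 by (intro mult_right_mono) auto
    ultimately have Fl: "F > 189/411" by simp
    have W45: "W < 4/5"
    proof (rule ccontr)
      assume "\<not> W < 4/5"
      hence "F \<le> exp (- (4/5))" by (simp add: F_def)
      thus False using exp45 Fl by simp
    qed
    have "W < 1" using W45 by simp
    hence "- (1000 * (R - Cf t)) < 0" unfolding W_def Wf_def R_def by simp
    hence "R > Cf t" by simp
    moreover have "Cf t \<ge> 497/500" using t by (simp add: Cf_def)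
    ultimately have Rh: "R > 1/2" by simp
    have R3: "(1/10) / R ^ 3 \<le> 1"
    proof -
      have "R ^ 3 \<ge> (1/2) ^ 3" using Rh by (intro power_mono) auto
      thus ?thesis using Rp by (simp add: field_simps)
    qed
    have q2l: "q\<^sup>2 \<ge> 1/2"
    proof -
      have "R\<^sup>2 \<ge> (1/2)\<^sup>2" using Rh by (intro power_mono) auto
      moreover have "(1/2::real)\<^sup>2 = 1/4" by (simp add: power_divide)
      ultimately have "x\<^sup>2 \<ge> R\<^sup>2 / 2" using R2 by linarith
      thus ?thesis using Rp by (simp add: q_def power_divide field_simps)
    qed
    have qw: "q\<^sup>2 * (1 - W) \<ge> 1/2 * (1/5)" using q2l W45 by (intro mult_mono) auto
    have FWp: "F * W > 0" using Fp Wp by simp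
    have BFW: "B * (F * W) > 0" using Bl FWp by simp
    have "F * W - F * W * W = F * W * (1 - W)" by (simp add: algebra_simps)
    hence e: "1000000 * B * q\<^sup>2 * (F * W - F * W * W) = B * (F * W) * (1000000 * (q\<^sup>2 * (1 - W)))"
      by (simp add: algebra_simps)
    have "B * (F * W) * (1000000 * (q\<^sup>2 * (1 - W))) \<ge> B * (F * W) * 100000"
    proof -
      have "1000000 * (q\<^sup>2 * (1 - W)) \<ge> 100000" using qw by linarith
      thus ?thesis using BFW by (intro mult_left_mono) auto
    qed
    moreover have "B * (F * W) * ((1/10) / R ^ 3) \<le> B * (F * W) * 1"
      using BFW R3 by (intro mult_left_mono) auto
    moreover have "1 - F \<le> W" using exp_ge_add_one_self[of "- W"] by (simp add: F_def)
    hence "667/2200 * (1 - F) \<le> 667/2200 * W" by simp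
    moreover have "B * (F * W) \<ge> 411/2200 * (189/411 * W)"
    proof -
      have "F * W \<ge> 189/411 * W" using Fl Wp by (intro mult_right_mono) auto
      moreover have "B * (F * W) \<ge> 411/2200 * (F * W)" using Bl FWp by (intro mult_right_mono) auto
      ultimately show ?thesis by linarith
    qed
    ultimately have "v4t t x - v4xx t x \<le> 0" using diff e Wp by linarith
    thus ?thesis using gnn by linarith
  qed
  show ?thesis using main lip by linarith
qed




lemma part4:
  assumes K: "K \<ge> 10^9" and sol: "classical_sol (g1 K) 2 3 u"
    and init: "\<forall>x. u 2 x \<ge> 2/11 * indicator {-1<..<1} x"
  shows "\<forall>x. u 3 x \<ge> 5/11 * indicator {-4*20<..<4*20} x"
proof -
  have cmp: "\<forall>t\<in>{2..3}. \<forall>x. v4 t x \<le> u t x"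
  proof (rule compare_lower[OF sol, where v = v4 and vt = v4t and vx = v4x and vxx = v4xx and Bv = "1/2" and L = K])
    show "continuous_on ({2..3} \<times> UNIV) (\<lambda>(t, x). v4 t x)"
      unfolding v4_def Wf_def Bf_def Cf_def rho_def
      by (auto simp: case_prod_beta' intro!: continuous_intros)
    show "v4 t x \<le> 1/2" if "t \<in> {2..3}" for t x
    proof -
      have B: "Bf t \<le> 49/100" "Bf t \<ge> 0" using that by (auto simp: Bf_def field_simps)
      have F: "1 - exp (- Wf t x) \<le> 1" by simp
      have W0: "Wf t x > 0" by (simp add: Wf_def)
      have "Bf t * (1 - exp (- Wf t x)) \<le> 49/100 * 1"
        using B F W0 by (intro mult_mono) auto
      thus ?thesis by (simp add: v4_def)
    qed
    show "((\<lambda>s. v4 s x) has_real_derivative v4t t x) (at t) \<and>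
          ((\<lambda>y. v4 t y) has_real_derivative v4x t x) (at x) \<and>
          ((\<lambda>y. v4x t y) has_real_derivative v4xx t x) (at x)" for t x
      using v4_dt v4_dx v4_dxx by blast
    show "v4 2 x \<le> u 2 x" for x
    proof (cases "x \<in> {-1<..<1}")
      case True
      have "u 2 x \<ge> 2/11" using init[rule_format, of x] True by simp
      moreover have "v4 2 x \<le> 2/11"
      proof -
        have "exp (- Wf 2 x) > 0" by simp
        have b2: "Bf 2 = 411/2200" by (simp add: Bf_def)
        have "Bf 2 * (1 - exp (- Wf 2 x)) \<le> Bf 2 * 1"
          using \<open>exp (- Wf 2 x) > 0\<close> b2 by (intro mult_left_mono) auto
        moreover have "v4 2 x = Bf 2 * (1 - exp (- Wf 2 x)) - 1/200" by (simp add: v4_def)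
        ultimately show ?thesis using b2 by linarith
      qed
      ultimately show ?thesis by simp
    next
      case False
      hence "\<bar>x\<bar> \<ge> 1" by auto
      hence "1 ^ 2 \<le> \<bar>x\<bar> ^ 2" by (intro power_mono) auto
      hence "x\<^sup>2 \<ge> 1" by simp
      hence "(rho x)\<^sup>2 \<ge> 1\<^sup>2" using rho_sq[of x] by simp
      have R1: "rho x \<ge> 1"
      proof (rule ccontr)
        assume "\<not> 1 \<le> rho x"
        hence "(rho x) ^ 2 < 1 ^ 2" using rho_pos[of x] by (intro power_strict_mono) auto
        thus False using \<open>(rho x)\<^sup>2 \<ge> 1\<^sup>2\<close> by simp
      qed
      have "- (1000 * (rho x - Cf 2)) \<le> - 6" using R1 by (simp add: Cf_def)
      hence "Wf 2 x \<le> exp (- 6)" by (simp add: Wf_def)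
      moreover have "exp (- 6) = 1 / exp (real 6)" by (simp add: exp_minus field_simps)
      moreover have "exp (real 6) \<ge> 2^6" by (rule exp_nat_ge)
      moreover have "1 / exp (real 6) \<le> 1 / 2^6"
        by (rule divide_left_mono) (use \<open>exp (real 6) \<ge> 2^6\<close> in auto)
      moreover have "1 / (2::real)^6 = 1/64" by simp
      ultimately have W: "Wf 2 x \<le> 1/64" by linarith
      have "1 - exp (- Wf 2 x) \<le> Wf 2 x" using exp_ge_add_one_self[of "- Wf 2 x"] by simp
      hence "Bf 2 * (1 - exp (- Wf 2 x)) \<le> Bf 2 * (1/64)" using W by (simp add: Bf_def)
      hence "v4 2 x \<le> 0" by (simp add: v4_def Bf_def)
      moreover have "u 2 x \<ge> 0" using sol_range[OF sol, of 2 x] by simp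
      ultimately show ?thesis by simp
    qed
    show "v4t t x - v4xx t x - g1 K r \<le> K * (v4 t x - r)"
      if "t \<in> {2<..<3}" "r \<in> {0..1}" "r < v4 t x" for t x r
      by (rule v4_ineq[OF K that])
  qed (use K in auto)
  show ?thesis
  proof
    fix x
    have u0: "u 3 x \<ge> 0" using sol_range[OF sol, of 3 x] by simp
    show "u 3 x \<ge> 5/11 * indicator {-4*20<..<4*20} x"
    proof (cases "x \<in> {-4*20<..<4*20}")
      case False thus ?thesis using u0 by simp
    next
      case True
      hence "\<bar>x\<bar> < 80" by auto
      hence "\<bar>x\<bar> ^ 2 < 80 ^ 2" by (intro power_strict_mono) auto
      hence "x\<^sup>2 < 80\<^sup>2" by simp
      hence "(rho x)\<^sup>2 < 81\<^sup>2" using rho_sq[of x] by simp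
      have R: "rho x < 81"
      proof (rule ccontr)
        assume "\<not> rho x < 81"
        hence "81 ^ 2 \<le> (rho x) ^ 2" by (intro power_mono) auto
        thus False using \<open>(rho x)\<^sup>2 < 81\<^sup>2\<close> by simp
      qed
      have "- (1000 * (rho x - Cf 3)) \<ge> 3" using R by (simp add: Cf_def)
      hence "Wf 3 x \<ge> exp 3" by (simp add: Wf_def)
      moreover have "exp (real 3) \<ge> 2^3" by (rule exp_nat_ge)
      ultimately have W: "Wf 3 x \<ge> 8" by simp
      have "exp (- Wf 3 x) \<le> exp (- 8)" using W by simp
      moreover have "exp (- 8) = 1 / exp (real 8)" by (simp add: exp_minus field_simps)
      moreover have "exp (real 8) \<ge> 2^8" by (rule exp_nat_ge)
      moreover have "1 / exp (real 8) \<le> 1 / 2^8"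
        by (rule divide_left_mono) (use \<open>exp (real 8) \<ge> 2^8\<close> in auto)
      moreover have "1 / (2::real)^8 = 1/256" by simp
      ultimately have F: "exp (- Wf 3 x) \<le> 1/256" by linarith
      have "v4 3 x = 49/100 * (1 - exp (- Wf 3 x)) - 1/200" by (simp add: v4_def Bf_def)
      moreover have "49/100 * (1 - exp (- Wf 3 x)) \<ge> 49/100 * (255/256)"
        using F by (intro mult_left_mono) auto
      ultimately have "v4 3 x \<ge> 5/11" by linarith
      moreover have "v4 3 x \<le> u 3 x" using cmp by auto
      ultimately show ?thesis using True by simp
    qed
  qed
qed



theorem lemma7p1:
  shows "\<exists>M::real. M > 0 \<and> (\<exists>a::real. 0 < a \<and> a < 1/16 \<and>
    (\<forall>u. classical_sol g0 0 1 u \<longrightarrow>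
       (\<forall>x. u 0 x \<le> indicator {..0} x + 5/8 * indicator {0<..} x) \<longrightarrow>
       (\<forall>x. u 1 x \<le> indicator {..M} x + (5/8 - 2*a) * indicator {M<..} x)) \<and>
    (\<forall>K::real. K \<ge> 0 \<longrightarrow> (\<forall>u. classical_sol (g1 K) 1 4 u \<longrightarrow>
       (\<forall>x. u 1 x \<le> indicator {..M} x + (5/8 - 2*a) * indicator {M<..} x) \<longrightarrow>
       (\<forall>x. u 4 x \<le> indicator {..2*M} x + (5/8 - a) * indicator {2*M<..} x))) \<and>
    (\<forall>u. classical_sol g0 (-1) 2 u \<longrightarrow>
       (\<forall>x. u (-1) x \<ge> 4/11 * indicator {-M<..<M} x) \<longrightarrow>
       (\<forall>x. min (u 0 x) (u 2 x) \<ge> 3/11 * indicator {-1<..<1} x)) \<and>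
    (\<exists>K0::real. \<forall>K\<ge>K0. \<forall>u. classical_sol (g1 K) 2 3 u \<longrightarrow>
       (\<forall>x. u 2 x \<ge> 2/11 * indicator {-1<..<1} x) \<longrightarrow>
       (\<forall>x. u 3 x \<ge> 5/11 * indicator {-4*M<..<4*M} x)))"
  apply (rule exI[where x=20])
  apply (rule conjI, simp)
  apply (rule exI[where x="1/4000"])
  apply (intro conjI)
       apply simp
      apply simp
     apply (rule allI, rule impI, rule impI)
     apply (rule part1; assumption)
    apply (rule allI, rule impI, rule allI, rule impI, rule impI)
    apply (rule part2; assumption)
   apply (rule allI, rule impI, rule impI)
   apply (rule part3; assumption)
  apply (rule exI[where x="10^9"])
  apply (rule allI, rule impI, rule allI, rule impI, rule impI)
  apply (rule part4; assumption)
  done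

end
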